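(* Let $b>0$, let $(\mathbf{x}_t,y_t)_{t\ge 1}$ be an arbitrary sequence with $\mathbf{x}_t\in\mathbb{R}^d$ and $y_t\in\{-1,+1\}$. Run the NR-RLS recursion: initialize $n_0^-=n_0^+=0$, $\mathbf{S}_0^-=\mathbf{S}_0^+=\mathbf{0}\in\mathbb{R}^{d\times d}$, $\mathbf{z}_0^-=\mathbf{z}_0^+=\mathbf{0}\in\mathbb{R}^d$, $\mathbf{R}_0^{-1}=\frac1b\mathbf{I}$, and for $t=1,2,\dots$ set $n_t^-=n_{t-1}^-+\frac{1-y_t}{2}$, $n_t^+=n_{t-1}^++\frac{1+y_t}{2}$, define $\beta_t^-,\beta_t^+,\beta_t,\bar{\mathbf{S}}_{t-1}$ as in the context, and $$\mathbf{G}_t^{-1}=\mathbf{R}_{t-1}^{-1}+\mathbf{R}_{t-1}^{-1}\big(\mathbf{I}-\beta_t\bar{\mathbf{S}}_{t-1}\mathbf{R}_{t-1}^{-1}\big)^{-1}\beta_t\bar{\mathbf{S}}_{t-1}\mathbf{R}_{t-1}^{-1},$$ $$\mathbf{R}_t^{-1}=\mathbf{G}_t^{-1}-\mathbf{G}_t^{-1}\big(\mathbf{I}+\beta_t\mathbf{x}_t\mathbf{x}_t^T\mathbf{G}_t^{-1}\big)^{-1}\beta_t\mathbf{x}_t\mathbf{x}_t^T\mathbf{G}_t^{-1},$$ $\mathbf{S}_t^\pm=\mathbf{S}_{t-1}^\pm+\beta_t^\pm(\mathbf{x}_t\mathbf{x}_t^T-\mathbf{S}_{t-1}^\pm)$,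 $\mathbf{z}_t^\pm=\mathbf{z}_{t-1}^\pm+\beta_t^\pm(\mathbf{x}_ty_t-\mathbf{z}_{t-1}^\pm)$, $\mathbf{z}_t=\mathbf{z}_t^-+\mathbf{z}_t^+$, and $\pmb w_t=\mathbf{R}_t^{-1}\mathbf{z}_t$. Then all the inverses appearing above exist, and for every $t\ge1$ the vector $\pmb w_t$ equals the batch TER solution $$\pmb w_t^{\mathrm{batch}}=\Big(\tfrac{1}{n_t^-}\sum_{i\le t,\,y_i=-1}\mathbf{x}_i\mathbf{x}_i^T+\tfrac{1}{n_t^+}\sum_{j\le t,\,y_j=+1}\mathbf{x}_j\mathbf{x}_j^T+b\mathbf{I}\Big)^{-1}\Big(\tfrac{1}{n_t^-}\sum_{i\le t,\,y_i=-1}\mathbf{x}_iy_i+\tfrac{1}{n_t^+}\sum_{j\le t,\,y_j=+1}\mathbf{x}_jy_j\Big),$$ (i.e. $(\mathbf{X}_t^T\mathbf{W}_t\mathbf{X}_t+b\mathbf{I})^{-1}\mathbf{X}_t^T\mathbf{W}_t\mathbf{y}_t$), which is the unique minimizer over $\pmb w\in\mathbb{R}^d$ of $$J_t(\pmb w)=\frac{1}{2n_t^-}\sum_{i\le t,\,y_i=-1}(y_i-\pmb w^T\mathbf{x}_i)^2+\frac{1}{2n_t^+}\sum_{j\le t,\,y_j=+1}(y_j-\pmb w^T\mathbf{x}_j)^2+\frac b2\|\pmb w\|_2^2 .$$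
   Context: Convention: any term of the form $\frac{1}{n}\sum(\cdots)$ over an empty class (i.e. with $n=0$) is defined to be zero. Definitions: $\beta_t^-=\frac{1}{n_t^-}$ if $y_t=-1$ and $\beta_t^-=0$ if $y_t=+1$; $\beta_t^+=\frac{1}{n_t^+}$ if $y_t=+1$ and $\beta_t^+=0$ if $y_t=-1$ (equivalently $\beta_t^-=\frac{1-y_t}{2n_t^-}$, $\beta_t^+=\frac{1+y_t}{2n_t^+}$ with the convention above); $\beta_t=\beta_t^-+\beta_t^+$; $\bar{\mathbf{S}}_{t-1}=\mathbf{S}_{t-1}^-$ if $y_t=-1$ and $\bar{\mathbf{S}}_{t-1}=\mathbf{S}_{t-1}^+$ if $y_t=+1$. $\mathbf{X}_t$ is the $t\times d$ matrix with rows $\mathbf{x}_1^T,\dots,\mathbf{x}_t^T$, $\mathbf{y}_t=(y_1,\dots,y_t)^T$, and $\mathbf{W}_t$ is the diagonal $t\times t$ matrix whose $i$-th diagonal entry is $1/n_t^-$ if $y_i=-1$ and $1/n_t^+$ if $y_i=+1$. *)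

theory Defs
  imports "HOL-Analysis.Analysis"
begin

definition outer :: "real^'n \<Rightarrow> real^'n \<Rightarrow> real^'n^'n" where
  "outer u v = (\<chi> i j. u $ i * v $ j)"

text \<open>State of NR-RLS after t steps: (n^-, n^+, S^-, S^+, z^-, z^+, R^{-1}).
  Indices: samples are x 1, x 2, ...; y t in {-1,+1}.\<close>
type_synonym 'n nrrls_state =
  "real \<times> real \<times> (real^'n^'n) \<times> (real^'n^'n) \<times> (real^'n) \<times> (real^'n) \<times> (real^'n^'n)"

definition st_nm :: "'n nrrls_state \<Rightarrow> real" where "st_nm s = fst s"
definition st_np :: "'n nrrls_state \<Rightarrow> real" where "st_np s = fst (snd s)"
definition st_Sm :: "'n nrrls_state \<Rightarrow> real^'n^'n" where "st_Sm s = fst (snd (snd s))"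
definition st_Sp :: "'n nrrls_state \<Rightarrow> real^'n^'n" where "st_Sp s = fst (snd (snd (snd s)))"
definition st_zm :: "'n nrrls_state \<Rightarrow> real^'n" where "st_zm s = fst (snd (snd (snd (snd s))))"
definition st_zp :: "'n nrrls_state \<Rightarrow> real^'n" where "st_zp s = fst (snd (snd (snd (snd (snd s)))))"
definition st_Rinv :: "'n nrrls_state \<Rightarrow> real^'n^'n" where "st_Rinv s = snd (snd (snd (snd (snd (snd s)))))"

definition nr_nm_new :: "'n nrrls_state \<Rightarrow> real \<Rightarrow> real" where
  "nr_nm_new s yt = st_nm s + (1 - yt) / 2"
definition nr_np_new :: "'n nrrls_state \<Rightarrow> real \<Rightarrow> real" where
  "nr_np_new s yt = st_np s + (1 + yt) / 2"
definition nr_beta_m :: "'n nrrls_state \<Rightarrow> real \<Rightarrow> real" where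
  "nr_beta_m s yt = (if yt = -1 then 1 / nr_nm_new s yt else 0)"
definition nr_beta_p :: "'n nrrls_state \<Rightarrow> real \<Rightarrow> real" where
  "nr_beta_p s yt = (if yt = 1 then 1 / nr_np_new s yt else 0)"
definition nr_beta :: "'n nrrls_state \<Rightarrow> real \<Rightarrow> real" where
  "nr_beta s yt = nr_beta_m s yt + nr_beta_p s yt"
definition nr_Sbar :: "'n nrrls_state \<Rightarrow> real \<Rightarrow> real^'n^'n" where
  "nr_Sbar s yt = (if yt = -1 then st_Sm s else st_Sp s)"

definition nr_M1 :: "'n nrrls_state \<Rightarrow> real \<Rightarrow> real^'n^'n" where
  "nr_M1 s yt = mat 1 - nr_beta s yt *\<^sub>R (nr_Sbar s yt ** st_Rinv s)"

definition nr_Ginv :: "'n nrrls_state \<Rightarrow> real \<Rightarrow> real^'n^'n" where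
  "nr_Ginv s yt = st_Rinv s + st_Rinv s ** matrix_inv (nr_M1 s yt)
       ** (nr_beta s yt *\<^sub>R nr_Sbar s yt) ** st_Rinv s"

definition nr_M2 :: "'n nrrls_state \<Rightarrow> real^'n \<Rightarrow> real \<Rightarrow> real^'n^'n" where
  "nr_M2 s xt yt = mat 1 + nr_beta s yt *\<^sub>R (outer xt xt ** nr_Ginv s yt)"

definition nr_step :: "'n nrrls_state \<Rightarrow> real^'n \<Rightarrow> real \<Rightarrow> 'n nrrls_state" where
  "nr_step s xt yt =
    (let G = nr_Ginv s yt;
         bm = nr_beta_m s yt; bp = nr_beta_p s yt; bt = nr_beta s yt;
         Rn = G - G ** matrix_inv (nr_M2 s xt yt) ** (bt *\<^sub>R outer xt xt) ** G
     in (nr_nm_new s yt, nr_np_new s yt,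
         st_Sm s + bm *\<^sub>R (outer xt xt - st_Sm s),
         st_Sp s + bp *\<^sub>R (outer xt xt - st_Sp s),
         st_zm s + bm *\<^sub>R (yt *\<^sub>R xt - st_zm s),
         st_zp s + bp *\<^sub>R (yt *\<^sub>R xt - st_zp s),
         Rn))"

primrec nrrls :: "real \<Rightarrow> (nat \<Rightarrow> real^'n) \<Rightarrow> (nat \<Rightarrow> real) \<Rightarrow> nat \<Rightarrow> 'n nrrls_state" where
  "nrrls b x y 0 = (0, 0, 0, 0, 0, 0, (1 / b) *\<^sub>R mat 1)"
| "nrrls b x y (Suc t) = nr_step (nrrls b x y t) (x (Suc t)) (y (Suc t))"

definition nrrls_w :: "real \<Rightarrow> (nat \<Rightarrow> real^'n) \<Rightarrow> (nat \<Rightarrow> real) \<Rightarrow> nat \<Rightarrow> real^'n" where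
  "nrrls_w b x y t = st_Rinv (nrrls b x y t) *v (st_zm (nrrls b x y t) + st_zp (nrrls b x y t))"

text \<open>Batch quantities. Class sizes are the counts of samples with each label among 1..t;
  note 1/0 = 0 in Isabelle, matching the empty-class convention.\<close>
definition cnt_m :: "(nat \<Rightarrow> real) \<Rightarrow> nat \<Rightarrow> real" where
  "cnt_m y t = real (card {i \<in> {1..t}. y i = -1})"
definition cnt_p :: "(nat \<Rightarrow> real) \<Rightarrow> nat \<Rightarrow> real" where
  "cnt_p y t = real (card {i \<in> {1..t}. y i = 1})"

definition batch_A :: "real \<Rightarrow> (nat \<Rightarrow> real^'n) \<Rightarrow> (nat \<Rightarrow> real) \<Rightarrow> nat \<Rightarrow> real^'n^'n" where
  "batch_A b x y t =
     (1 / cnt_m y t) *\<^sub>R (\<Sum>i\<in>{i \<in> {1..t}. y i = -1}. outer (x i) (x i))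
   + (1 / cnt_p y t) *\<^sub>R (\<Sum>j\<in>{j \<in> {1..t}. y j = 1}. outer (x j) (x j))
   + b *\<^sub>R mat 1"

definition batch_v :: "(nat \<Rightarrow> real^'n) \<Rightarrow> (nat \<Rightarrow> real) \<Rightarrow> nat \<Rightarrow> real^'n" where
  "batch_v x y t =
     (1 / cnt_m y t) *\<^sub>R (\<Sum>i\<in>{i \<in> {1..t}. y i = -1}. y i *\<^sub>R x i)
   + (1 / cnt_p y t) *\<^sub>R (\<Sum>j\<in>{j \<in> {1..t}. y j = 1}. y j *\<^sub>R x j)"

definition ter_J :: "real \<Rightarrow> (nat \<Rightarrow> real^'n) \<Rightarrow> (nat \<Rightarrow> real) \<Rightarrow> nat \<Rightarrow> real^'n \<Rightarrow> real" where
  "ter_J b x y t w =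
     1 / (2 * cnt_m y t) * (\<Sum>i\<in>{i \<in> {1..t}. y i = -1}. (y i - w \<bullet> x i)\<^sup>2)
   + 1 / (2 * cnt_p y t) * (\<Sum>j\<in>{j \<in> {1..t}. y j = 1}. (y j - w \<bullet> x j)\<^sup>2)
   + b / 2 * (norm w)\<^sup>2"

end

theory Submission
  imports Defs
begin

lemma matrix_inv_props:
  fixes A :: "real^'n^'n"
  assumes "invertible A"
  shows "A ** matrix_inv A = mat 1" "matrix_inv A ** A = mat 1"
proof -
  have "\<exists>A'. A ** A' = mat 1 \<and> A' ** A = mat 1" using assms unfolding invertible_def by blast
  then have "A ** matrix_inv A = mat 1 \<and> matrix_inv A ** A = mat 1"
    unfolding matrix_inv_def by (rule someI_ex)
  then show "A ** matrix_inv A = mat 1" "matrix_inv A ** A = mat 1" by auto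
qed

lemma matrix_inv_unique:
  fixes A B :: "real^'n^'n"
  assumes "A ** B = mat 1"
  shows "invertible A" "matrix_inv A = B"
proof -
  show inv: "invertible A" using assms invertible_right_inverse by blast
  have "matrix_inv A = matrix_inv A ** (A ** B)" using assms by simp
  also have "\<dots> = B" using matrix_inv_props(2)[OF inv] by (simp add: matrix_mul_assoc)
  finally show "matrix_inv A = B" .
qed

lemma matrix_add_rdistrib: "((A::real^'n^'m) + B) ** C = A ** C + B ** (C::real^'p^'n)"
  by (vector matrix_matrix_mult_def sum.distrib distrib_right)
lemma matrix_diff_rdistrib: "((A::real^'n^'m) - B) ** C = A ** C - B ** (C::real^'p^'n)"
  by (vector matrix_matrix_mult_def sum_subtractf left_diff_distrib)
lemma matrix_diff_ldistrib: "(A::real^'n^'m) ** (B - C) = A ** B - A ** (C::real^'p^'n)"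
  by (vector matrix_matrix_mult_def sum_subtractf right_diff_distrib)

lemma woodbury1:
  fixes R B :: "real^'n^'n"
  assumes R: "invertible R" and P: "invertible (R - B)"
  shows "invertible (mat 1 - B ** matrix_inv R)"
    "matrix_inv R + matrix_inv R ** matrix_inv (mat 1 - B ** matrix_inv R) ** B ** matrix_inv R
       = matrix_inv (R - B)"
proof -
  define Ri where "Ri = matrix_inv R"
  define Pi where "Pi = matrix_inv (R - B)"
  note r = matrix_inv_props[OF R, folded Ri_def]
  note p = matrix_inv_props[OF P, folded Pi_def]
  have e: "mat 1 - B ** Ri = (R - B) ** Ri" using r by (simp add: matrix_diff_rdistrib)
  have "(mat 1 - B ** Ri) ** (R ** Pi) = mat 1"
    unfolding e by (metis matrix_mul_assoc matrix_mul_lid r(2) p(1))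
  from matrix_inv_unique[OF this]
  have i: "invertible (mat 1 - B ** Ri)" "matrix_inv (mat 1 - B ** Ri) = R ** Pi" by auto
  then show "invertible (mat 1 - B ** matrix_inv R)" by (simp add: Ri_def)
  have "Ri + Ri ** (R ** Pi) ** B ** Ri = Ri + Pi ** B ** Ri"
    by (metis matrix_mul_assoc matrix_mul_lid r(2))
  also have "\<dots> = Pi ** (R - B) ** Ri + Pi ** B ** Ri" by (simp add: p(2))
  also have "\<dots> = Pi ** ((R - B) + B) ** Ri"
    by (simp only: matrix_add_ldistrib matrix_add_rdistrib)
  also have "\<dots> = Pi" by (simp add: matrix_mul_assoc[symmetric] r(1))
  finally show "matrix_inv R + matrix_inv R ** matrix_inv (mat 1 - B ** matrix_inv R) ** B ** matrix_inv R
       = matrix_inv (R - B)" using i by (simp add: Ri_def Pi_def)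
qed

lemma woodbury2:
  fixes G Gi B :: "real^'n^'n"
  assumes g1: "G ** Gi = mat 1" and g2: "Gi ** G = mat 1" and Q: "invertible (G + B)"
  shows "invertible (mat 1 + B ** Gi)"
    "Gi - Gi ** matrix_inv (mat 1 + B ** Gi) ** B ** Gi = matrix_inv (G + B)"
proof -
  define Qi where "Qi = matrix_inv (G + B)"
  note q = matrix_inv_props[OF Q, folded Qi_def]
  have e: "mat 1 + B ** Gi = (G + B) ** Gi" using g1 by (simp add: matrix_add_rdistrib)
  have "(mat 1 + B ** Gi) ** (G ** Qi) = mat 1"
    unfolding e by (metis matrix_mul_assoc matrix_mul_lid g2 q(1))
  from matrix_inv_unique[OF this]
  have i: "invertible (mat 1 + B ** Gi)" "matrix_inv (mat 1 + B ** Gi) = G ** Qi" by auto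
  then show "invertible (mat 1 + B ** Gi)" by simp
  have "Gi - Gi ** (G ** Qi) ** B ** Gi = Gi - Qi ** B ** Gi"
    by (metis matrix_mul_assoc matrix_mul_lid g2)
  also have "\<dots> = Qi ** (G + B) ** Gi - Qi ** B ** Gi" by (simp add: q(2))
  also have "\<dots> = Qi ** ((G + B) - B) ** Gi"
    by (simp only: matrix_diff_ldistrib matrix_diff_rdistrib)
  also have "\<dots> = Qi" by (simp add: matrix_mul_assoc[symmetric] g1)
  finally show "Gi - Gi ** matrix_inv (mat 1 + B ** Gi) ** B ** Gi = matrix_inv (G + B)"
    using i by (simp add: Qi_def)
qed

definition psd :: "real^'n^'n \<Rightarrow> bool" where "psd M \<longleftrightarrow> (\<forall>v. 0 \<le> v \<bullet> (M *v v))"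

lemma outer_mult: "outer u u *v v = (u \<bullet> v) *\<^sub>R u"
  by (simp add: vec_eq_iff outer_def matrix_vector_mult_def inner_vec_def sum_distrib_left
      sum_distrib_right mult.commute mult.left_commute)

lemma sum_mult_vec: "(sum f S) *v (v::real^'n) = (\<Sum>i\<in>S. f i *v v)"
  by (induction S rule: infinite_finite_induct) (auto simp: matrix_vector_mult_add_rdistrib)

lemma psd_outer: "psd (outer u u)"
  by (simp add: psd_def outer_mult inner_commute)

lemma psd_sum: "(\<And>i. i \<in> S \<Longrightarrow> psd (f i)) \<Longrightarrow> psd (sum f S)"
  unfolding psd_def sum_mult_vec inner_sum_right by (simp add: sum_nonneg)

lemma psd_scale: "psd M \<Longrightarrow> 0 \<le> c \<Longrightarrow> psd (c *\<^sub>R M)"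
  unfolding psd_def by (simp add: scaleR_matrix_vector_assoc[symmetric])

lemma psd_add: "psd M \<Longrightarrow> psd N \<Longrightarrow> psd (M + N)"
  unfolding psd_def by (simp add: matrix_vector_mult_add_rdistrib inner_add_right add_nonneg_nonneg)

lemma quad_lower:
  fixes M :: "real^'n^'n"
  assumes "psd M"
  shows "b * (v \<bullet> v) \<le> v \<bullet> ((M + b *\<^sub>R mat 1) *v v)"
  using assms unfolding psd_def
  by (simp add: matrix_vector_mult_add_rdistrib inner_add_right scaleR_matrix_vector_assoc[symmetric])

lemma pd_invertible:
  fixes M :: "real^'n^'n"
  assumes "psd M" "b > 0"
  shows "invertible (M + b *\<^sub>R mat 1)"
proof -
  have "\<forall>v. (M + b *\<^sub>R mat 1) *v v = 0 \<longrightarrow> v = 0"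
  proof (intro allI impI)
    fix v assume "(M + b *\<^sub>R mat 1) *v v = 0"
    with quad_lower[OF assms(1), of b v] have "b * (v \<bullet> v) \<le> 0" by simp
    with assms(2) have "v \<bullet> v \<le> 0" by (simp add: mult_le_0_iff)
    then show "v = 0" by (metis inner_eq_zero_iff inner_ge_zero order_antisym)
  qed
  then show ?thesis using invertible_left_inverse matrix_left_invertible_ker by blast
qed


definition Ic :: "(nat \<Rightarrow> real) \<Rightarrow> real \<Rightarrow> nat \<Rightarrow> nat set" where
  "Ic y c t = {i \<in> {1..t}. y i = c}"

definition SS :: "(nat \<Rightarrow> real^'n) \<Rightarrow> (nat \<Rightarrow> real) \<Rightarrow> real \<Rightarrow> nat \<Rightarrow> real^'n^'n" where
  "SS x y c t = (1 / real (card (Ic y c t))) *\<^sub>R (\<Sum>i\<in>Ic y c t. outer (x i) (x i))"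
definition ZZ :: "(nat \<Rightarrow> real^'n) \<Rightarrow> (nat \<Rightarrow> real) \<Rightarrow> real \<Rightarrow> nat \<Rightarrow> real^'n" where
  "ZZ x y c t = (1 / real (card (Ic y c t))) *\<^sub>R (\<Sum>i\<in>Ic y c t. y i *\<^sub>R x i)"

lemma finite_Ic[simp]: "finite (Ic y c t)" by (simp add: Ic_def)

lemma Ic_Suc: "Ic y c (Suc t) = (if y (Suc t) = c then insert (Suc t) (Ic y c t) else Ic y c t)"
  by (auto simp: Ic_def le_Suc_eq)

lemma Suc_notin_Ic[simp]: "Suc t \<notin> Ic y c t" by (simp add: Ic_def)

lemma Ic_0[simp]: "Ic y c 0 = {}" by (simp add: Ic_def)

lemma upd_gen:
  fixes S T v :: "'a::real_vector" and n :: real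
  assumes "n \<ge> 0" "T = n *\<^sub>R S"
  shows "(1/(n+1)) *\<^sub>R (T + v) = S + (1/(n+1)) *\<^sub>R (v - S)"
proof -
  have e: "n/(n+1) = 1 - 1/(n+1)" using assms(1) by (simp add: field_simps)
  have "(1/(n+1)) *\<^sub>R (T + v) = (n/(n+1)) *\<^sub>R S + (1/(n+1)) *\<^sub>R v"
    using assms(2) by (simp add: scaleR_add_right)
  also have "\<dots> = S + (1/(n+1)) *\<^sub>R (v - S)"
    unfolding e by (simp add: algebra_simps)
  finally show ?thesis .
qed

lemma class_avg:
  fixes f :: "nat \<Rightarrow> 'a::real_vector"
  shows "(\<Sum>i\<in>Ic y c t. f i) = real (card (Ic y c t)) *\<^sub>R ((1 / real (card (Ic y c t))) *\<^sub>R (\<Sum>i\<in>Ic y c t. f i))"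
proof (cases "card (Ic y c t) = 0")
  case True
  then have "Ic y c t = {}" by simp
  then show ?thesis by simp
qed simp

lemma class_upd:
  fixes f :: "nat \<Rightarrow> 'a::real_vector"
  assumes "y (Suc t) = c"
  shows "(1 / real (card (Ic y c (Suc t)))) *\<^sub>R (\<Sum>i\<in>Ic y c (Suc t). f i)
    = (1 / real (card (Ic y c t))) *\<^sub>R (\<Sum>i\<in>Ic y c t. f i)
      + (1 / (real (card (Ic y c t)) + 1)) *\<^sub>R (f (Suc t) - (1 / real (card (Ic y c t))) *\<^sub>R (\<Sum>i\<in>Ic y c t. f i))"
proof -
  have "(1 / real (card (Ic y c (Suc t)))) *\<^sub>R (\<Sum>i\<in>Ic y c (Suc t). f i)
     = (1 / (real (card (Ic y c t)) + 1)) *\<^sub>R ((\<Sum>i\<in>Ic y c t. f i) + f (Suc t))"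
    using assms by (simp add: Ic_Suc add.commute)
  then show ?thesis using upd_gen[OF _ class_avg] by simp
qed

lemma class_same:
  assumes "y (Suc t) \<noteq> c"
  shows "Ic y c (Suc t) = Ic y c t"
  using assms by (simp add: Ic_Suc)

lemma psd_SS: "psd (SS x y c t)"
  unfolding SS_def by (intro psd_scale psd_sum psd_outer) simp

lemma batch_A_eq: "batch_A b x y t = SS x y (-1) t + SS x y 1 t + b *\<^sub>R mat 1"
  by (simp add: batch_A_def SS_def Ic_def cnt_m_def cnt_p_def)

lemma batch_v_eq: "batch_v x y t = ZZ x y (-1) t + ZZ x y 1 t"
  by (simp add: batch_v_def ZZ_def Ic_def cnt_m_def cnt_p_def)

lemma cnt_eq: "cnt_m y t = real (card (Ic y (-1) t))" "cnt_p y t = real (card (Ic y 1 t))"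
  by (simp_all add: Ic_def cnt_m_def cnt_p_def)

lemma batch_A_inv: "b > 0 \<Longrightarrow> invertible (batch_A b x y t)"
  unfolding batch_A_eq by (intro pd_invertible psd_add psd_SS)


lemma R_step:
  fixes Sa Sb :: "real^'n^'n" and u :: "real^'n"
  assumes psa: "psd Sa" and psb: "psd Sb" and b: "b > 0" and be: "0 \<le> \<beta>" "\<beta> \<le> 1"
  defines "Ri \<equiv> matrix_inv (Sa + Sb + b *\<^sub>R mat 1)"
  defines "Gi \<equiv> Ri + Ri ** matrix_inv (mat 1 - \<beta> *\<^sub>R (Sa ** Ri)) ** (\<beta> *\<^sub>R Sa) ** Ri"
  shows "invertible (mat 1 - \<beta> *\<^sub>R (Sa ** Ri))"
    "invertible (mat 1 + \<beta> *\<^sub>R (outer u u ** Gi))"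
    "Gi - Gi ** matrix_inv (mat 1 + \<beta> *\<^sub>R (outer u u ** Gi)) ** (\<beta> *\<^sub>R outer u u) ** Gi
       = matrix_inv ((Sa + \<beta> *\<^sub>R (outer u u - Sa)) + Sb + b *\<^sub>R mat 1)"
proof -
  define R where "R = Sa + Sb + b *\<^sub>R mat 1"
  have R: "invertible R" unfolding R_def by (intro pd_invertible psd_add psa psb b)
  have Pe: "R - \<beta> *\<^sub>R Sa = ((1 - \<beta>) *\<^sub>R Sa + Sb) + b *\<^sub>R mat 1"
    unfolding R_def by (simp add: algebra_simps)
  have P: "invertible (R - \<beta> *\<^sub>R Sa)" unfolding Pe
    using be by (intro pd_invertible psd_add psd_scale psa psb b) auto
  have e1: "\<beta> *\<^sub>R (Sa ** Ri) = (\<beta> *\<^sub>R Sa) ** Ri" by (simp add: scalar_matrix_assoc)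
  note w1 = woodbury1[OF R P]
  show "invertible (mat 1 - \<beta> *\<^sub>R (Sa ** Ri))" unfolding e1 using w1(1) by (simp add: Ri_def R_def)
  have G: "Gi = matrix_inv (R - \<beta> *\<^sub>R Sa)"
    unfolding Gi_def e1 using w1(2) by (simp add: Ri_def R_def)
  note gp = matrix_inv_props[OF P, folded G]
  have Qe: "(R - \<beta> *\<^sub>R Sa) + \<beta> *\<^sub>R outer u u = (Sa + \<beta> *\<^sub>R (outer u u - Sa)) + Sb + b *\<^sub>R mat 1"
    unfolding R_def by (simp add: algebra_simps)
  have Qe2: "(R - \<beta> *\<^sub>R Sa) + \<beta> *\<^sub>R outer u u = (((1 - \<beta>) *\<^sub>R Sa + \<beta> *\<^sub>R outer u u) + Sb) + b *\<^sub>R mat 1"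
    unfolding R_def by (simp add: algebra_simps)
  have Q: "invertible ((R - \<beta> *\<^sub>R Sa) + \<beta> *\<^sub>R outer u u)" unfolding Qe2
    using be by (intro pd_invertible psd_add psd_scale psa psb b psd_outer) auto
  have e2: "\<beta> *\<^sub>R (outer u u ** Gi) = (\<beta> *\<^sub>R outer u u) ** Gi" by (simp add: scalar_matrix_assoc)
  note w2 = woodbury2[OF gp Q]
  show "invertible (mat 1 + \<beta> *\<^sub>R (outer u u ** Gi))" using w2(1) unfolding e2 .
  show "Gi - Gi ** matrix_inv (mat 1 + \<beta> *\<^sub>R (outer u u ** Gi)) ** (\<beta> *\<^sub>R outer u u) ** Gi
       = matrix_inv ((Sa + \<beta> *\<^sub>R (outer u u - Sa)) + Sb + b *\<^sub>R mat 1)"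
    using w2(2) unfolding e2 Qe .
qed

definition INV :: "real \<Rightarrow> (nat \<Rightarrow> real^'n) \<Rightarrow> (nat \<Rightarrow> real) \<Rightarrow> nat \<Rightarrow> 'n nrrls_state \<Rightarrow> bool" where
  "INV b x y t s \<longleftrightarrow> st_nm s = real (card (Ic y (-1) t)) \<and> st_np s = real (card (Ic y 1 t))
     \<and> st_Sm s = SS x y (-1) t \<and> st_Sp s = SS x y 1 t \<and> st_zm s = ZZ x y (-1) t \<and> st_zp s = ZZ x y 1 t
     \<and> st_Rinv s = matrix_inv (batch_A b x y t)"

lemma step_proj:
  "st_nm (nr_step s xt yt) = nr_nm_new s yt"
  "st_np (nr_step s xt yt) = nr_np_new s yt"
  "st_Sm (nr_step s xt yt) = st_Sm s + nr_beta_m s yt *\<^sub>R (outer xt xt - st_Sm s)"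
  "st_Sp (nr_step s xt yt) = st_Sp s + nr_beta_p s yt *\<^sub>R (outer xt xt - st_Sp s)"
  "st_zm (nr_step s xt yt) = st_zm s + nr_beta_m s yt *\<^sub>R (yt *\<^sub>R xt - st_zm s)"
  "st_zp (nr_step s xt yt) = st_zp s + nr_beta_p s yt *\<^sub>R (yt *\<^sub>R xt - st_zp s)"
  "st_Rinv (nr_step s xt yt) = nr_Ginv s yt - nr_Ginv s yt ** matrix_inv (nr_M2 s xt yt) ** (nr_beta s yt *\<^sub>R outer xt xt) ** nr_Ginv s yt"
  by (simp_all add: nr_step_def Let_def st_nm_def st_np_def st_Sm_def st_Sp_def st_zm_def st_zp_def st_Rinv_def)

lemma step:
  fixes x :: "nat \<Rightarrow> real^'n"
  assumes b: "b > 0" and yt: "y (Suc t) \<in> {-1, 1}" and I: "INV b x y t s"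
  shows "invertible (nr_M1 s (y (Suc t)))" "invertible (nr_M2 s (x (Suc t)) (y (Suc t)))"
    "INV b x y (Suc t) (nr_step s (x (Suc t)) (y (Suc t)))"
proof -
  let ?u = "x (Suc t)"
  have nm: "st_nm s = real (card (Ic y (-1) t))" and np: "st_np s = real (card (Ic y 1 t))"
    and Sm: "st_Sm s = SS x y (-1) t" and Sp: "st_Sp s = SS x y 1 t"
    and zm: "st_zm s = ZZ x y (-1) t" and zp: "st_zp s = ZZ x y 1 t"
    and Ri: "st_Rinv s = matrix_inv (batch_A b x y t)" using I unfolding INV_def by auto
  have "invertible (nr_M1 s (y (Suc t))) \<and> invertible (nr_M2 s (x (Suc t)) (y (Suc t)))
    \<and> INV b x y (Suc t) (nr_step s (x (Suc t)) (y (Suc t)))"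
  proof (cases "y (Suc t) = -1")
    case True
    define \<beta> where "\<beta> = 1 / (real (card (Ic y (-1) t)) + 1)"
    have bm: "nr_beta_m s (y (Suc t)) = \<beta>" using True nm
      by (simp add: nr_beta_m_def nr_nm_new_def \<beta>_def)
    have bp: "nr_beta_p s (y (Suc t)) = 0" using True by (simp add: nr_beta_p_def)
    have bt: "nr_beta s (y (Suc t)) = \<beta>" using bm bp by (simp add: nr_beta_def)
    have be: "0 \<le> \<beta>" "\<beta> \<le> 1" by (auto simp: \<beta>_def field_simps)
    have Sbar: "nr_Sbar s (y (Suc t)) = SS x y (-1) t" using True Sm by (simp add: nr_Sbar_def)
    note RS = R_step[OF psd_SS[of x y "-1" t] psd_SS[of x y 1 t] b be]
    have A: "batch_A b x y t = SS x y (-1) t + SS x y 1 t + b *\<^sub>R mat 1" by (rule batch_A_eq)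
    have M1: "nr_M1 s (y (Suc t)) = mat 1 - \<beta> *\<^sub>R (SS x y (-1) t ** matrix_inv (SS x y (-1) t + SS x y 1 t + b *\<^sub>R mat 1))"
      unfolding nr_M1_def bt Sbar Ri A ..
    have Gi: "nr_Ginv s (y (Suc t)) = matrix_inv (SS x y (-1) t + SS x y 1 t + b *\<^sub>R mat 1) + matrix_inv (SS x y (-1) t + SS x y 1 t + b *\<^sub>R mat 1) ** matrix_inv (mat 1 - \<beta> *\<^sub>R (SS x y (-1) t ** matrix_inv (SS x y (-1) t + SS x y 1 t + b *\<^sub>R mat 1))) ** (\<beta> *\<^sub>R SS x y (-1) t) ** matrix_inv (SS x y (-1) t + SS x y 1 t + b *\<^sub>R mat 1)"
      unfolding nr_Ginv_def M1[symmetric] bt Sbar Ri A ..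
    have Smn: "SS x y (-1) t + \<beta> *\<^sub>R (outer ?u ?u - SS x y (-1) t) = SS x y (-1) (Suc t)"
      unfolding SS_def \<beta>_def using class_upd[of y t "-1" "\<lambda>i. outer (x i) (x i)", OF True] by simp
    have Spn: "SS x y 1 (Suc t) = SS x y 1 t" using True by (simp add: SS_def class_same)
    have zmn: "ZZ x y (-1) t + \<beta> *\<^sub>R (y (Suc t) *\<^sub>R ?u - ZZ x y (-1) t) = ZZ x y (-1) (Suc t)"
      unfolding ZZ_def \<beta>_def using class_upd[of y t "-1" "\<lambda>i. y i *\<^sub>R x i", OF True] by simp
    have zpn: "ZZ x y 1 (Suc t) = ZZ x y 1 t" using True by (simp add: ZZ_def class_same)
    have An: "batch_A b x y (Suc t) = (SS x y (-1) t + \<beta> *\<^sub>R (outer ?u ?u - SS x y (-1) t)) + SS x y 1 t + b *\<^sub>R mat 1"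
      unfolding batch_A_eq Smn Spn ..
    show ?thesis
    proof (intro conjI)
      show "invertible (nr_M1 s (y (Suc t)))" unfolding M1 by (rule RS(1))
      show "invertible (nr_M2 s ?u (y (Suc t)))" unfolding nr_M2_def bt Gi by (rule RS(2))
      show "INV b x y (Suc t) (nr_step s ?u (y (Suc t)))"
      proof -
        have R': "st_Rinv (nr_step s ?u (y (Suc t))) = matrix_inv (batch_A b x y (Suc t))"
          unfolding step_proj nr_M2_def bt Gi An by (rule RS(3))
        have c1: "st_nm (nr_step s ?u (y (Suc t))) = real (card (Ic y (-1) (Suc t)))"
          unfolding step_proj nr_nm_new_def using True nm by (simp add: Ic_Suc)
        have c2: "st_np (nr_step s ?u (y (Suc t))) = real (card (Ic y 1 (Suc t)))"
          unfolding step_proj nr_np_new_def using True np by (simp add: Ic_Suc)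
        have c3: "st_Sm (nr_step s ?u (y (Suc t))) = SS x y (-1) (Suc t)"
          unfolding step_proj bm Sm Smn ..
        have c4: "st_Sp (nr_step s ?u (y (Suc t))) = SS x y 1 (Suc t)"
          unfolding step_proj bp Sp Spn by simp
        have c5: "st_zm (nr_step s ?u (y (Suc t))) = ZZ x y (-1) (Suc t)"
          unfolding step_proj bm zm zmn ..
        have c6: "st_zp (nr_step s ?u (y (Suc t))) = ZZ x y 1 (Suc t)"
          unfolding step_proj bp zp zpn by simp
        show ?thesis unfolding INV_def using R' c1 c2 c3 c4 c5 c6 by blast
      qed
    qed
  next
    case False
    then have T: "y (Suc t) = 1" using yt by auto
    define \<beta> where "\<beta> = 1 / (real (card (Ic y 1 t)) + 1)"
    have bp: "nr_beta_p s (y (Suc t)) = \<beta>" using T np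
      by (simp add: nr_beta_p_def nr_np_new_def \<beta>_def)
    have bm: "nr_beta_m s (y (Suc t)) = 0" using T by (simp add: nr_beta_m_def)
    have bt: "nr_beta s (y (Suc t)) = \<beta>" using bm bp by (simp add: nr_beta_def)
    have be: "0 \<le> \<beta>" "\<beta> \<le> 1" by (auto simp: \<beta>_def field_simps)
    have Sbar: "nr_Sbar s (y (Suc t)) = SS x y 1 t" using T Sp by (simp add: nr_Sbar_def)
    note RS = R_step[OF psd_SS[of x y 1 t] psd_SS[of x y "-1" t] b be]
    have A: "batch_A b x y t = SS x y 1 t + SS x y (-1) t + b *\<^sub>R mat 1"
      unfolding batch_A_eq by (simp add: algebra_simps)
    have M1: "nr_M1 s (y (Suc t)) = mat 1 - \<beta> *\<^sub>R (SS x y 1 t ** matrix_inv (SS x y 1 t + SS x y (-1) t + b *\<^sub>R mat 1))"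
      unfolding nr_M1_def bt Sbar Ri A ..
    have Gi: "nr_Ginv s (y (Suc t)) = matrix_inv (SS x y 1 t + SS x y (-1) t + b *\<^sub>R mat 1) + matrix_inv (SS x y 1 t + SS x y (-1) t + b *\<^sub>R mat 1) ** matrix_inv (mat 1 - \<beta> *\<^sub>R (SS x y 1 t ** matrix_inv (SS x y 1 t + SS x y (-1) t + b *\<^sub>R mat 1))) ** (\<beta> *\<^sub>R SS x y 1 t) ** matrix_inv (SS x y 1 t + SS x y (-1) t + b *\<^sub>R mat 1)"
      unfolding nr_Ginv_def M1[symmetric] bt Sbar Ri A ..
    have Spn: "SS x y 1 t + \<beta> *\<^sub>R (outer ?u ?u - SS x y 1 t) = SS x y 1 (Suc t)"
      unfolding SS_def \<beta>_def using class_upd[of y t 1 "\<lambda>i. outer (x i) (x i)", OF T] by simp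
    have Smn: "SS x y (-1) (Suc t) = SS x y (-1) t" using T by (simp add: SS_def class_same)
    have zpn: "ZZ x y 1 t + \<beta> *\<^sub>R (y (Suc t) *\<^sub>R ?u - ZZ x y 1 t) = ZZ x y 1 (Suc t)"
      unfolding ZZ_def \<beta>_def using class_upd[of y t 1 "\<lambda>i. y i *\<^sub>R x i", OF T] by simp
    have zmn: "ZZ x y (-1) (Suc t) = ZZ x y (-1) t" using T by (simp add: ZZ_def class_same)
    have An: "batch_A b x y (Suc t) = (SS x y 1 t + \<beta> *\<^sub>R (outer ?u ?u - SS x y 1 t)) + SS x y (-1) t + b *\<^sub>R mat 1"
      unfolding batch_A_eq Spn Smn by (simp add: algebra_simps)
    show ?thesis
    proof (intro conjI)
      show "invertible (nr_M1 s (y (Suc t)))" unfolding M1 by (rule RS(1))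
      show "invertible (nr_M2 s ?u (y (Suc t)))" unfolding nr_M2_def bt Gi by (rule RS(2))
      show "INV b x y (Suc t) (nr_step s ?u (y (Suc t)))"
      proof -
        have R': "st_Rinv (nr_step s ?u (y (Suc t))) = matrix_inv (batch_A b x y (Suc t))"
          unfolding step_proj nr_M2_def bt Gi An by (rule RS(3))
        have c1: "st_nm (nr_step s ?u (y (Suc t))) = real (card (Ic y (-1) (Suc t)))"
          unfolding step_proj nr_nm_new_def using T nm by (simp add: Ic_Suc)
        have c2: "st_np (nr_step s ?u (y (Suc t))) = real (card (Ic y 1 (Suc t)))"
          unfolding step_proj nr_np_new_def using T np by (simp add: Ic_Suc)
        have c3: "st_Sm (nr_step s ?u (y (Suc t))) = SS x y (-1) (Suc t)"
          unfolding step_proj bm Sm Smn by simp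
        have c4: "st_Sp (nr_step s ?u (y (Suc t))) = SS x y 1 (Suc t)"
          unfolding step_proj bp Sp Spn ..
        have c5: "st_zm (nr_step s ?u (y (Suc t))) = ZZ x y (-1) (Suc t)"
          unfolding step_proj bm zm zmn by simp
        have c6: "st_zp (nr_step s ?u (y (Suc t))) = ZZ x y 1 (Suc t)"
          unfolding step_proj bp zp zpn ..
        show ?thesis unfolding INV_def using R' c1 c2 c3 c4 c5 c6 by blast
      qed
    qed
  qed
  then show "invertible (nr_M1 s (y (Suc t)))" "invertible (nr_M2 s (x (Suc t)) (y (Suc t)))"
    "INV b x y (Suc t) (nr_step s (x (Suc t)) (y (Suc t)))" by auto
qed


lemma SS_mult_inner: "d \<bullet> (SS x y c t *v w) = (1 / real (card (Ic y c t))) * (\<Sum>i\<in>Ic y c t. (x i \<bullet> w) * (d \<bullet> x i))"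
  unfolding SS_def scaleR_matrix_vector_assoc[symmetric] sum_mult_vec outer_mult
  by (simp add: inner_sum_right)

lemma ZZ_inner: "d \<bullet> ZZ x y c t = (1 / real (card (Ic y c t))) * (\<Sum>i\<in>Ic y c t. y i * (d \<bullet> x i))"
  unfolding ZZ_def by (simp add: inner_sum_right)

lemma class_J:
  "(1 / (2 * real (card (Ic y c t)))) * (\<Sum>i\<in>Ic y c t. (y i - (w + d) \<bullet> x i)\<^sup>2)
   = (1 / (2 * real (card (Ic y c t)))) * (\<Sum>i\<in>Ic y c t. (y i - w \<bullet> x i)\<^sup>2)
     + d \<bullet> (SS x y c t *v w) - d \<bullet> ZZ x y c t + 1/2 * (d \<bullet> (SS x y c t *v d))"
proof -
  define n where "n = real (card (Ic y c t))"
  have pt: "\<And>i. (y i - (w + d) \<bullet> x i)\<^sup>2 = (y i - w \<bullet> x i)\<^sup>2 + 2 * ((x i \<bullet> w) * (d \<bullet> x i))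
      - 2 * (y i * (d \<bullet> x i)) + (x i \<bullet> d) * (d \<bullet> x i)"
    by (simp add: inner_add_left inner_commute power2_eq_square algebra_simps)
  have "(\<Sum>i\<in>Ic y c t. (y i - (w + d) \<bullet> x i)\<^sup>2) = (\<Sum>i\<in>Ic y c t. (y i - w \<bullet> x i)\<^sup>2)
     + 2 * (\<Sum>i\<in>Ic y c t. (x i \<bullet> w) * (d \<bullet> x i)) - 2 * (\<Sum>i\<in>Ic y c t. y i * (d \<bullet> x i))
     + (\<Sum>i\<in>Ic y c t. (x i \<bullet> d) * (d \<bullet> x i))"
    unfolding pt by (simp add: sum.distrib sum_subtractf sum_distrib_left)
  note h = this
  define k where "k = 1 / n"
  have kk: "1 / (2 * n) = k / 2" by (simp add: k_def)
  show ?thesis unfolding SS_mult_inner ZZ_inner n_def[symmetric] kk h k_def[symmetric]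
    by (simp add: algebra_simps)
qed

lemma J_expand:
  "ter_J b x y t (w + d) = ter_J b x y t w + d \<bullet> (batch_A b x y t *v w - batch_v x y t)
     + 1/2 * (d \<bullet> (batch_A b x y t *v d))"
proof -
  have n: "(norm (w + d))\<^sup>2 = (norm w)\<^sup>2 + 2 * (d \<bullet> w) + (norm d)\<^sup>2"
    by (simp add: power2_norm_eq_inner inner_add_left inner_add_right inner_commute)
  have e: "\<And>c. {i \<in> {1..t}. y i = c} = Ic y c t" by (simp add: Ic_def)
  show ?thesis
    unfolding ter_J_def e cnt_eq class_J[of y "-1" t w d x] class_J[of y 1 t w d x] n
      batch_A_eq batch_v_eq
    by (simp add: algebra_simps inner_add_right inner_diff_right scaleR_matrix_vector_assoc[symmetric]
        power2_norm_eq_inner inner_commute)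
qed

lemma INV_all:
  fixes x :: "nat \<Rightarrow> real^'n"
  assumes b: "b > 0" and yt: "\<And>t. t \<ge> 1 \<Longrightarrow> y t \<in> {-1, 1}"
  shows "INV b x y t (nrrls b x y t)"
proof (induction t)
  case 0
  have "(b *\<^sub>R mat 1) ** ((1/b) *\<^sub>R mat 1) = (mat 1 :: real^'n^'n)"
    using b by (simp add: matrix_scalar_ac scalar_matrix_assoc[symmetric])
  then have "matrix_inv (batch_A b x y 0) = (1/b) *\<^sub>R mat 1"
    using matrix_inv_unique(2) by (simp add: batch_A_eq SS_def)
  then show ?case
    by (simp add: INV_def st_nm_def st_np_def st_Sm_def st_Sp_def st_zm_def st_zp_def st_Rinv_def SS_def ZZ_def)
next
  case (Suc t)
  have "y (Suc t) \<in> {-1, 1}" using yt[of "Suc t"] by simp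
  from step(3)[OF b this Suc.IH] show ?case by simp
qed


theorem theorem1:
  fixes b :: real and x :: "nat \<Rightarrow> real^'n" and y :: "nat \<Rightarrow> real"
  assumes "b > 0"
    and "\<And>t. t \<ge> 1 \<Longrightarrow> y t \<in> {-1, 1}"
  shows "\<forall>t \<ge> 1.
      invertible (nr_M1 (nrrls b x y (t - 1)) (y t))
    \<and> invertible (nr_M2 (nrrls b x y (t - 1)) (x t) (y t))
    \<and> invertible (batch_A b x y t)
    \<and> nrrls_w b x y t = matrix_inv (batch_A b x y t) *v batch_v x y t
    \<and> (\<forall>v. ter_J b x y t (nrrls_w b x y t) \<le> ter_J b x y t v)
    \<and> (\<forall>v. (\<forall>u. ter_J b x y t v \<le> ter_J b x y t u) \<longrightarrow> v = nrrls_w b x y t)"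
proof (intro allI impI)
  fix t :: nat assume t1: "t \<ge> 1"
  then obtain k where tk: "t = Suc k" by (cases t) auto
  have yk: "y (Suc k) \<in> {-1, 1}" using assms(2)[of "Suc k"] by simp
  have I: "INV b x y k (nrrls b x y k)" by (rule INV_all[OF assms])
  note st = step[OF assms(1) yk I]
  have Ainv: "invertible (batch_A b x y t)" by (rule batch_A_inv[OF assms(1)])
  have It: "INV b x y t (nrrls b x y t)" by (rule INV_all[OF assms])
  define w where "w = nrrls_w b x y t"
  define A where "A = batch_A b x y t"
  define v where "v = batch_v x y t"
  have weq: "w = matrix_inv A *v v"
    using It unfolding w_def A_def v_def nrrls_w_def INV_def batch_v_eq by simp
  have Aw: "A *v w = v"
    unfolding weq matrix_vector_mul_assoc matrix_inv_props(1)[OF Ainv[folded A_def]] by simp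
  have Jd: "ter_J b x y t u = ter_J b x y t w + 1/2 * ((u - w) \<bullet> (A *v (u - w)))" for u
    using J_expand[of b x y t w "u - w"] unfolding Aw A_def[symmetric] v_def[symmetric] by simp
  have quad: "b * (d \<bullet> d) \<le> d \<bullet> (A *v d)" for d
    unfolding A_def batch_A_eq by (intro quad_lower psd_add psd_SS)
  have minJ: "ter_J b x y t w \<le> ter_J b x y t u" for u
  proof -
    have "0 \<le> b * ((u - w) \<bullet> (u - w))" using assms(1) by simp
    with quad[of "u - w"] show ?thesis unfolding Jd[of u] by simp
  qed
  have uniq: "u = w" if h: "\<forall>u'. ter_J b x y t u \<le> ter_J b x y t u'" for u
  proof -
    have "ter_J b x y t u \<le> ter_J b x y t w" using h by simp
    then have "(u - w) \<bullet> (A *v (u - w)) \<le> 0" unfolding Jd[of u] by simp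
    with quad[of "u - w"] have "b * ((u - w) \<bullet> (u - w)) \<le> 0" by simp
    with assms(1) have "(u - w) \<bullet> (u - w) \<le> 0" by (simp add: mult_le_0_iff)
    then have "u - w = 0" by (metis inner_eq_zero_iff inner_ge_zero order_antisym)
    then show ?thesis by simp
  qed
  show "invertible (nr_M1 (nrrls b x y (t - 1)) (y t))
    \<and> invertible (nr_M2 (nrrls b x y (t - 1)) (x t) (y t))
    \<and> invertible (batch_A b x y t)
    \<and> nrrls_w b x y t = matrix_inv (batch_A b x y t) *v batch_v x y t
    \<and> (\<forall>v. ter_J b x y t (nrrls_w b x y t) \<le> ter_J b x y t v)
    \<and> (\<forall>v. (\<forall>u. ter_J b x y t v \<le> ter_J b x y t u) \<longrightarrow> v = nrrls_w b x y t)"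
    using st(1,2) Ainv weq minJ uniq unfolding tk w_def A_def v_def by auto
qed

end
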